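(* Let $G$, $k\ge 3$, the choice strings $c_{i,j}$, the template string $t$, $L$ and $d$ be as in the binary construction in the context, and let $s\in\{0,1\}^L$ be a solution, i.e. $t$ and every choice string $c_{i,j}$ ($1\le i<j\le k$) have a substring of length $L$ at Hamming distance at most $d$ from $s$. Then the encoding part of $s$ contains exactly $k$ symbols $1$.
   Context: Let $G=(V,E)$ be an undirected simple graph with $V=\{v_1,\dots,v_n\}$ and edge set $E=\{e_1,\dots,e_m\}$, and let $k\ge 3$ be an integer; put $N=\binom{k}{2}$ and $b=nk-2k+2$. All strings are over $\{0,1\}$. For $1\le p\le n$ let $\mathrm{number}(p)=0^{p-1}10^{n-p}$. Let $\mathrm{front\_tag}=(1^{3nk}0)^{nk}$ (length $(3nk+1)nk$). Order the pairs $(i,j)$, $1\le i<j\le k$, lexicographically and let $i'$ be the position of $(i,j)$ in this order. For an edge $e$ joining $v_r,v_s$ with $r<s$ let $\mathrm{encode}(i,j,e)=(0^n)^{i-1}\,\mathrm{number}(r)\,(0^n)^{j-i-1}\,\mathrm{number}(s)\,(0^n)^{k-j}$, $\mathrm{back\_tag}(i')=0^{(i'-1)b}1^{b}0^{(N-i')b}$, and $\mathrm{block}(i,j,e)=\mathrm{front\_tag}\,\mathrm{encode}(i,j,e)\,\mathrm{back\_tag}(i')$. The choice string is $c_{i,j}=\mathrm{block}(i,j,e_1)\cdots\mathrm{block}(i,j,e_m)$. The template string is $t=\mathrm{front\_tag}\,1^{nk}\,0^{Nb}$. Set $L=(3nk+1)nk+nk+Nb$ and $d=nk-k$. For a string $s$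 of length $L$, its encoding part is the substring of its positions $(3nk+1)nk+1,\dots,(3nk+1)nk+nk$. *)

theory Defs
  imports Main
begin

text \<open>Binary strings are lists of booleans: False = 0, True = 1.
  Positions are 1-based in the paper; lists are 0-based here.\<close>

definition zeros :: "nat \<Rightarrow> bool list" where "zeros l = replicate l False"
definition ones :: "nat \<Rightarrow> bool list" where "ones l = replicate l True"

definition number :: "nat \<Rightarrow> nat \<Rightarrow> bool list" where
  "number n p = zeros (p - 1) @ [True] @ zeros (n - p)"

definition front_tag :: "nat \<Rightarrow> nat \<Rightarrow> bool list" where
  "front_tag n k = concat (replicate (n*k) (ones (3*n*k) @ [False]))"

definition NN :: "nat \<Rightarrow> nat" where "NN k = k choose 2"

definition bb :: "nat \<Rightarrow> nat \<Rightarrow> nat" where "bb n k = n*k - 2*k + 2"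

definition pairs :: "nat \<Rightarrow> (nat \<times> nat) list" where
  "pairs k = concat (map (\<lambda>i. map (\<lambda>j. (i,j)) [i+1..<k+1]) [1..<k+1])"

definition pair_pos :: "nat \<Rightarrow> nat \<Rightarrow> nat \<Rightarrow> nat" where
  "pair_pos k i j = length (takeWhile (\<lambda>p. p \<noteq> (i,j)) (pairs k)) + 1"

text \<open>An edge is a pair (r,s) of vertex indices with r < s.\<close>
definition encode :: "nat \<Rightarrow> nat \<Rightarrow> nat \<Rightarrow> nat \<Rightarrow> nat \<times> nat \<Rightarrow> bool list" where
  "encode n k i j e = concat (replicate (i-1) (zeros n)) @ number n (fst e)
     @ concat (replicate (j-i-1) (zeros n)) @ number n (snd e)
     @ concat (replicate (k-j) (zeros n))"

definition back_tag :: "nat \<Rightarrow> nat \<Rightarrow> nat \<Rightarrow> bool list" where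
  "back_tag n k i' = zeros ((i'-1) * bb n k) @ ones (bb n k) @ zeros ((NN k - i') * bb n k)"

definition block :: "nat \<Rightarrow> nat \<Rightarrow> nat \<Rightarrow> nat \<Rightarrow> nat \<times> nat \<Rightarrow> bool list" where
  "block n k i j e = front_tag n k @ encode n k i j e @ back_tag n k (pair_pos k i j)"

definition choice_string :: "nat \<Rightarrow> (nat \<times> nat) list \<Rightarrow> nat \<Rightarrow> nat \<Rightarrow> nat \<Rightarrow> bool list" where
  "choice_string n E k i j = concat (map (block n k i j) E)"

definition template :: "nat \<Rightarrow> nat \<Rightarrow> bool list" where
  "template n k = front_tag n k @ ones (n*k) @ zeros (NN k * bb n k)"

definition LL :: "nat \<Rightarrow> nat \<Rightarrow> nat" where
  "LL n k = (3*n*k+1)*n*k + n*k + NN k * bb n k"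

definition dd :: "nat \<Rightarrow> nat \<Rightarrow> nat" where "dd n k = n*k - k"

definition hamming :: "bool list \<Rightarrow> bool list \<Rightarrow> nat" where
  "hamming x y = length (filter (\<lambda>(a,b). a \<noteq> b) (zip x y))"

definition close_substring :: "bool list \<Rightarrow> nat \<Rightarrow> bool list \<Rightarrow> bool" where
  "close_substring c d s = (\<exists>p. p + length s \<le> length c \<and>
       hamming (take (length s) (drop p c)) s \<le> d)"

definition encoding_part :: "nat \<Rightarrow> nat \<Rightarrow> bool list \<Rightarrow> bool list" where
  "encoding_part n k s = take (n*k) (drop ((3*n*k+1)*n*k) s)"

end

theory Submission
  imports Defs
begin

lemma concat_replicate_nth:
  "i < m * length xs \<Longrightarrow> concat (replicate m xs) ! i = xs ! (i mod length xs)"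
proof (induction m arbitrary: i)
  case 0 then show ?case by simp
next
  case (Suc m)
  show ?case
  proof (cases "i < length xs")
    case True then show ?thesis by (simp add: nth_append)
  next
    case False
    then have "i - length xs < m * length xs" using Suc.prems by simp
    then have "concat (replicate m xs) ! (i - length xs) = xs ! ((i - length xs) mod length xs)"
      using Suc.IH by blast
    moreover have "(i - length xs) mod length xs = i mod length xs"
      using False by (simp add: le_mod_geq)
    ultimately show ?thesis using False by (simp add: nth_append)
  qed
qed

lemma front_tag_len: "length (front_tag n k) = (3*n*k+1)*(n*k)"
  unfolding front_tag_def ones_def by (simp add: length_concat sum_list_replicate)

lemma front_tag_nth:
  assumes "i < (3*n*k+1)*(n*k)"
  shows "front_tag n k ! i = (i mod (3*n*k+1) \<noteq> 3*n*k)"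
proof -
  have l: "length (ones (3*n*k) @ [False]) = 3*n*k+1" by (simp add: ones_def)
  have "front_tag n k ! i = (ones (3*n*k) @ [False]) ! (i mod (3*n*k+1))"
    unfolding front_tag_def using concat_replicate_nth[of i "n*k" "ones (3*n*k) @ [False]"] assms l
    by (simp add: mult.commute)
  moreover have "i mod (3*n*k+1) < 3*n*k+1" by simp
  ultimately show ?thesis
    by (auto simp: nth_append ones_def less_Suc_eq)
qed

lemma concat_map_nth:
  assumes "\<forall>x\<in>set xs. length (f x) = L" "a < length xs" "r < L"
  shows "concat (map f xs) ! (a*L + r) = f (xs!a) ! r"
  using assms
proof (induction xs arbitrary: a)
  case Nil then show ?case by simp
next
  case (Cons x xs)
  show ?case
  proof (cases a)
    case 0 then show ?thesis using Cons.prems by (simp add: nth_append)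
  next
    case (Suc a')
    have "concat (map f xs) ! (a'*L + r) = f (xs!a') ! r" using Cons Suc by auto
    then show ?thesis using Cons.prems Suc by (simp add: nth_append add.assoc)
  qed
qed

lemma concat_map_len:
  assumes "\<forall>x\<in>set xs. length (f x) = L"
  shows "length (concat (map f xs)) = length xs * L"
  using assms by (induction xs) auto

lemma count_card: "count_list xs a = card {i. i < length xs \<and> xs!i = a}"
  by (simp add: count_list_eq_length_filter length_filter_conv_card eq_commute)

lemma hamming_card: "length x = length y \<Longrightarrow> hamming x y = card {i. i < length x \<and> x!i \<noteq> y!i}"
  unfolding hamming_def by (auto simp: length_filter_conv_card intro!: arg_cong[where f=card])

lemma length_takeWhile_less: "x \<in> set xs \<Longrightarrow> \<not> P x \<Longrightarrow> length (takeWhile P xs) < length xs"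
  by (induction xs) auto



lemma number_len: "1 \<le> p \<Longrightarrow> p \<le> n \<Longrightarrow> length (number n p) = n"
  by (simp add: number_def zeros_def)

lemma number_count: "count_list (number n p) True = 1"
  by (simp add: number_def zeros_def)

lemma count_zeros_concat: "count_list (concat (replicate m (zeros n))) True = 0"
  by (induction m) (simp_all add: zeros_def)

lemma len_zeros_concat: "length (concat (replicate m (zeros n))) = m*n"
  by (induction m) (simp_all add: zeros_def)

lemma encode_len:
  assumes "1 \<le> i" "i < j" "j \<le> k" "1 \<le> fst e" "fst e \<le> n" "1 \<le> snd e" "snd e \<le> n"
  shows "length (encode n k i j e) = n*k"
proof -
  have "length (encode n k i j e) = (i-1)*n + n + (j-i-1)*n + n + (k-j)*n"
    unfolding encode_def using assms by (simp add: len_zeros_concat number_len)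
  also have "\<dots> = ((i-1) + 1 + (j-i-1) + 1 + (k-j))*n" by (simp add: algebra_simps)
  also have "(i-1) + 1 + (j-i-1) + 1 + (k-j) = k" using assms by simp
  finally show ?thesis by simp
qed

lemma encode_count: "count_list (encode n k i j e) True = 2"
  unfolding encode_def by (simp add: count_zeros_concat number_count)

lemma back_tag_len:
  assumes "1 \<le> i'" "i' \<le> NN k"
  shows "length (back_tag n k i') = NN k * bb n k"
proof -
  have "length (back_tag n k i') = (i'-1)*bb n k + bb n k + (NN k - i')*bb n k"
    by (simp add: back_tag_def zeros_def ones_def)
  also have "\<dots> = ((i'-1) + 1 + (NN k - i'))*bb n k" by (simp add: algebra_simps)
  also have "(i'-1) + 1 + (NN k - i') = NN k" using assms by simp
  finally show ?thesis .
qed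

lemma count_repl_True: "count_list (replicate m True) True = m"
  by (induction m) auto

lemma back_tag_count: "count_list (back_tag n k i') True = bb n k"
  by (simp add: back_tag_def zeros_def ones_def count_repl_True)

lemma back_tag_nth:
  assumes "(i'-1)*bb n k \<le> x" "x < (i'-1)*bb n k + bb n k"
  shows "back_tag n k i' ! x"
proof -
  have "back_tag n k i' = zeros ((i'-1)*bb n k) @ (ones (bb n k) @ zeros ((NN k - i') * bb n k))"
    by (simp add: back_tag_def)
  moreover have "(ones (bb n k) @ zeros ((NN k - i') * bb n k)) ! (x - (i'-1)*bb n k)"
  proof -
    have "x - (i'-1)*bb n k < bb n k" using assms by arith
    then show ?thesis by (simp add: nth_append ones_def)
  qed
  ultimately show ?thesis using assms by (simp add: nth_append zeros_def)
qed

lemma block_len: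
  assumes "1 \<le> i" "i < j" "j \<le> k" "1 \<le> fst e" "fst e \<le> n" "1 \<le> snd e" "snd e \<le> n"
    "1 \<le> pair_pos k i j" "pair_pos k i j \<le> NN k"
  shows "length (block n k i j e) = LL n k"
  using assms by (simp add: block_def LL_def front_tag_len encode_len back_tag_len algebra_simps)

lemma block_front:
  assumes "r < (3*n*k+1)*(n*k)"
  shows "block n k i j e ! r = (r mod (3*n*k+1) \<noteq> 3*n*k)"
  using assms by (simp add: block_def nth_append front_tag_len front_tag_nth)

lemma block_rest:
  assumes "(3*n*k+1)*(n*k) \<le> r"
  shows "block n k i j e ! r = (encode n k i j e @ back_tag n k (pair_pos k i j)) ! (r - (3*n*k+1)*(n*k))"
  using assms by (simp add: block_def nth_append front_tag_len)

lemma pairs_len: "length (pairs k) = NN k"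
proof -
  have "length (pairs k) = (\<Sum>i\<leftarrow>[1..<k+1]. k + 1 - (i + 1))"
    by (simp only: pairs_def length_concat map_map comp_def length_map length_upt)
  also have "\<dots> = (\<Sum>i\<leftarrow>[1..<k+1]. k - i)" by simp
  also have "\<dots> = (\<Sum>i\<in>{1..k}. k - i)"
    by (simp only: sum_set_upt_conv_sum_list_nat[symmetric] set_upt Suc_eq_plus1[symmetric] atLeastLessThanSuc_atLeastAtMost)
  also have "2 * \<dots> = k*(k-1)"
  proof (induction k)
    case 0 then show ?case by simp
  next
    case (Suc k)
    have "(\<Sum>i\<in>{1..Suc k}. Suc k - i) = (\<Sum>i\<in>{1..k}. Suc k - i) + 0"
      by simp
    also have "(\<Sum>i\<in>{1..k}. Suc k - i) = (\<Sum>i\<in>{1..k}. (k - i) + 1)"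
      by (rule sum.cong) auto
    also have "\<dots> = (\<Sum>i\<in>{1..k}. k - i) + (\<Sum>i\<in>{1..k}. 1)" by (rule sum.distrib)
    also have "\<dots> = (\<Sum>i\<in>{1..k}. k - i) + k" by simp
    finally have "2*(\<Sum>i\<in>{1..Suc k}. Suc k - i) = k*(k-1) + 2*k" using Suc by simp
    also have "\<dots> = Suc k * (Suc k - 1)" by (cases k) (simp_all add: algebra_simps)
    finally show ?case .
  qed
  ultimately show ?thesis by (simp add: NN_def choose_two)
qed

lemma pair_in: "1 \<le> i \<Longrightarrow> i < j \<Longrightarrow> j \<le> k \<Longrightarrow> (i,j) \<in> set (pairs k)"
  unfolding pairs_def by (auto simp del: upt_Suc intro!: bexI[where x=i])

lemma pair_pos_bounds:
  assumes "1 \<le> i" "i < j" "j \<le> k"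
  shows "1 \<le> pair_pos k i j \<and> pair_pos k i j \<le> NN k \<and> pairs k ! (pair_pos k i j - 1) = (i,j)"
proof -
  have m: "(i,j) \<in> set (pairs k)" using pair_in assms by blast
  have l: "length (takeWhile (\<lambda>p. p \<noteq> (i,j)) (pairs k)) < length (pairs k)"
    using length_takeWhile_less[OF m] by simp
  have "pairs k ! length (takeWhile (\<lambda>p. p \<noteq> (i,j)) (pairs k)) = (i,j)"
    using nth_length_takeWhile[OF l] by simp
  then show ?thesis using l pairs_len by (simp add: pair_pos_def)
qed



lemma mod_seg: "(0::nat) < P \<Longrightarrow> j*P \<le> i \<Longrightarrow> i < j*P + P \<Longrightarrow> i mod P = i - j*P"
proof -
  assume a: "0 < P" "j*P \<le> i" "i < j*P + P"
  have "i = j*P + (i - j*P)" using a by simp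
  then have "i mod P = (j*P + (i - j*P)) mod P" by simp
  also have "\<dots> = (i - j*P) mod P" by simp
  also have "\<dots> = i - j*P" using a by simp
  finally show ?thesis .
qed

lemma mod_lin: "c < (P::nat) \<Longrightarrow> (j*P + c) mod P = c"
  by simp

lemma seg_nf:
  fixes G :: "nat \<Rightarrow> bool"
  assumes "\<forall>i. j*P \<le> i \<and> i < j*P + m \<longrightarrow> Fl \<le> q + i \<and> q + i < L"
    and "card {r. Fl \<le> r \<and> r < L \<and> G r} \<le> c"
  shows "m - c \<le> card {i. j*P \<le> i \<and> i < j*P + m \<and> \<not> G (q+i)}"
proof -
  let ?S = "{j*P..<j*P+m}"
  let ?O = "{i\<in>?S. G (q+i)}"
  have "?O \<subseteq> ?S" by auto
  have "(\<lambda>i. q+i) ` ?O \<subseteq> {r. Fl \<le> r \<and> r < L \<and> G r}" using assms(1) by auto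
  then have "card ((\<lambda>i. q+i) ` ?O) \<le> card {r. Fl \<le> r \<and> r < L \<and> G r}"
    by (intro card_mono) auto
  moreover have "card ((\<lambda>i. q+i) ` ?O) = card ?O" by (intro card_image) (auto simp: inj_on_def)
  ultimately have cO: "card ?O \<le> c" using assms(2) by linarith
  have "{i. j*P \<le> i \<and> i < j*P + m \<and> \<not> G (q+i)} = ?S - ?O" by auto
  moreover have "card (?S - ?O) = m - card ?O" by (subst card_Diff_subset) auto
  ultimately show ?thesis using cO by simp
qed

lemma count_res:
  assumes "(0::nat) < P"
  shows "card {i. a \<le> i \<and> i < a + R \<and> i mod P = c} \<le> R div P + 1"
proof (cases "R = 0")
  case True
  then have "{i. a \<le> i \<and> i < a + R \<and> i mod P = c} = {}" by auto
  then show ?thesis by (metis card.empty zero_le)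
next
  case False
  let ?S = "{i. a \<le> i \<and> i < a + R \<and> i mod P = c}"
  have inj: "inj_on (\<lambda>i. (i - a) div P) ?S"
  proof (rule inj_onI)
    fix x y assume x: "x \<in> ?S" and y: "y \<in> ?S" and e: "(x - a) div P = (y - a) div P"
    show "x = y"
    proof (rule ccontr)
      assume ne: "x \<noteq> y"
      { fix u v assume u: "u \<in> ?S" and v: "v \<in> ?S" and uv: "u < v" and e2: "(u - a) div P = (v - a) div P"
        have "v mod P = u mod P" using u v by simp
        then have "P dvd v - u" using uv by (simp add: mod_eq_dvd_iff_nat)
        moreover have "v - u > 0" using uv by simp
        ultimately have "P \<le> v - u" by (simp add: dvd_imp_le)
        then have "(u - a) + P \<le> v - a" using u v uv by auto
        then have "((u - a) + P) div P \<le> (v - a) div P" by (rule div_le_mono)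
        moreover have "((u - a) + P) div P = (u - a) div P + 1" using assms by (simp add: div_add_self2)
        ultimately have False using e2 by simp }
      note * = this
      show False
      proof (cases "x < y")
        case True then show False using *[OF x y True e] by simp
      next
        case False then have "y < x" using ne by simp
        then show False using *[OF y x _ e[symmetric]] by simp
      qed
    qed
  qed
  have img: "(\<lambda>i. (i - a) div P) ` ?S \<subseteq> {..(R - 1) div P}"
  proof
    fix z assume "z \<in> (\<lambda>i. (i - a) div P) ` ?S"
    then obtain i where i: "i \<in> ?S" "z = (i - a) div P" by auto
    have "i - a \<le> R - 1" using i by auto
    then have "(i - a) div P \<le> (R - 1) div P" by (rule div_le_mono)
    then show "z \<in> {..(R - 1) div P}" using i by simp
  qed
  have "card ?S = card ((\<lambda>i. (i - a) div P) ` ?S)" using card_image[OF inj] by simp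
  also have "\<dots> \<le> card {..(R - 1) div P}" using img by (intro card_mono) auto
  also have "\<dots> = (R - 1) div P + 1" by simp
  also have "\<dots> \<le> R div P + 1" by (simp add: div_le_mono)
  finally show ?thesis .
qed

lemma arith3:
  fixes M k N bb P R :: nat
  assumes "P = 3*M+1" "R = M + N*bb" "bb = M + 2 - 2*k" "M \<ge> 2*k" "N \<ge> 3" "k \<ge> 3"
  shows "2*M - 2*k + 1 \<le> (R - (2+bb)) - (R div P + 1)"
proof -
  define X where "X = R div P"
  have XP: "X*P \<le> R" unfolding X_def by (simp add: div_times_less_eq_dividend)
  have Nb: "N*bb \<ge> 3*bb" using assms(5) by simp
  show ?thesis
  proof (cases "X = 0")
    case True
    then show ?thesis using assms Nb unfolding X_def[symmetric] by linarith
  next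
    case False
    have e: "X * P = 3*M*X + X" using assms(1) by (simp add: algebra_simps)
    have m: "3*M \<le> 3*M*X" using False by simp
    show ?thesis using assms XP Nb e m unfolding X_def[symmetric] by linarith
  qed
qed



lemma window_bound:
  fixes M k N bb q P Fl R L :: nat and G1 G2 :: "nat \<Rightarrow> bool"
  assumes P: "P = 3*M+1" and Fl: "Fl = M*P" and R: "R = M + N*bb" and L: "L = Fl + R"
    and k: "k \<ge> 3" and M: "M \<ge> 2*k" and bb: "bb = M + 2 - 2*k" and N: "N \<ge> 3"
    and G1: "\<forall>r<Fl. G1 r = (r mod P \<noteq> 3*M)" and G2: "\<forall>r<Fl. G2 r = (r mod P \<noteq> 3*M)"
    and ones: "card {r. Fl \<le> r \<and> r < L \<and> G1 r} \<le> 2 + bb"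
    and q: "0 < q" "q < L"
  shows "2*M - 2*k + 1 \<le> card {i. i < Fl \<and> (if q + i < L then G1 (q+i) else G2 (q+i-L)) \<noteq> (i mod P \<noteq> 3*M)}"
    (is "_ \<le> card ?Mis")
proof -
  have finM: "finite ?Mis" by (rule finite_subset[of _ "{..<Fl}"]) auto
  have P0: "0 < P" using P by simp
  have M1: "M \<ge> 6" using M k by simp
  have p3: "3*M < P" using P by simp
  have segle: "\<And>j. j < M \<Longrightarrow> j*P + P \<le> Fl"
  proof -
    fix j assume "j < M"
    then have "Suc j * P \<le> M * P" by (intro mult_le_mono1) simp
    then show "j*P + P \<le> Fl" using Fl by simp
  qed
  have nfseg: "2*M - 2*k + 1 \<le> card ?Mis"
    if j: "j < M" and cov: "\<forall>i. j*P \<le> i \<and> i < j*P + 3*M \<longrightarrow> Fl \<le> q + i \<and> q + i < L" for j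
  proof -
    have c: "3*M - (2+bb) \<le> card {i. j*P \<le> i \<and> i < j*P + 3*M \<and> \<not> G1 (q+i)}"
      by (rule seg_nf[OF cov ones])
    have sub: "{i. j*P \<le> i \<and> i < j*P + 3*M \<and> \<not> G1 (q+i)} \<subseteq> ?Mis"
    proof
      fix i assume i: "i \<in> {i. j*P \<le> i \<and> i < j*P + 3*M \<and> \<not> G1 (q+i)}"
      have "i < Fl" using i segle[OF j] P by auto
      moreover have "q + i < L" using cov i by auto
      moreover have "i mod P = i - j*P" using i P by (intro mod_seg) auto
      ultimately show "i \<in> ?Mis" using i by auto
    qed
    have "card {i. j*P \<le> i \<and> i < j*P + 3*M \<and> \<not> G1 (q+i)} \<le> card ?Mis"
      by (rule card_mono[OF finM sub])
    then show ?thesis using c bb M k by linarith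
  qed
  consider (c1) "q < P" | (c2) "P \<le> q" "q \<le> R" | (c3) "R < q" "q < Fl" | (c4) "R < q" "Fl \<le> q"
    by linarith
  then show ?thesis
  proof cases
    case c1
    define A1 where "A1 = (\<lambda>j. j*P + (3*M - q)) ` {..<M}"
    define A2 where "A2 = (\<lambda>j. j*P + 3*M) ` {..<M-1}"
    have cA1: "card A1 = M" unfolding A1_def using P0 by (subst card_image) (auto simp: inj_on_def)
    have cA2: "card A2 = M - 1" unfolding A2_def using P0 by (subst card_image) (auto simp: inj_on_def)
    have dis: "A1 \<inter> A2 = {}"
    proof -
      have m1: "\<forall>x\<in>A1. x mod P = 3*M - q" unfolding A1_def
        by (auto intro!: mod_lin) (use P in simp)
      have m2: "\<forall>x\<in>A2. x mod P = 3*M" unfolding A2_def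
        by (auto intro!: mod_lin) (use P in simp)
      show ?thesis using m1 m2 q c1 P by fastforce
    qed
    have s1: "A1 \<subseteq> ?Mis"
    proof
      fix i assume "i \<in> A1"
      then obtain j where j: "j < M" "i = j*P + (3*M - q)" unfolding A1_def by auto
      have a: "j*P + P \<le> Fl" using segle[OF j(1)] .
      have b: "q + i = j*P + 3*M" using j c1 P by simp
      have mm: "(j*P + 3*M) mod P = 3*M" by (rule mod_lin) (use p3 in simp)
      have mm2: "(j*P + (3*M - q)) mod P = 3*M - q" by (rule mod_lin) (use p3 in simp)
      have "i < Fl" using a j(2) p3 by simp
      moreover have "q + i < L" using a b p3 L by simp
      moreover have "G1 (q+i) = False" using G1 a b mm p3 by simp
      moreover have "i mod P \<noteq> 3*M" using j(2) c1 q mm2 P by simp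
      ultimately show "i \<in> ?Mis" by simp
    qed
    have s2: "A2 \<subseteq> ?Mis"
    proof
      fix i assume "i \<in> A2"
      then obtain j where j: "j < M - 1" "i = j*P + 3*M" unfolding A2_def by auto
      have a: "Suc j*P + P \<le> Fl" using segle[of "Suc j"] j(1) by simp
      have b: "q + i = Suc j*P + (q - 1)" using j c1 q P by simp
      have mm: "(Suc j*P + (q - 1)) mod P = q - 1" by (rule mod_lin) (use c1 in simp)
      have mm2: "(j*P + 3*M) mod P = 3*M" by (rule mod_lin) (use p3 in simp)
      have "i < Fl" using a j(2) p3 by simp
      moreover have "q + i < L" using a b p3 L c1 by simp
      moreover have "G1 (q+i) = True"
      proof -
        have qq: "q - 1 \<noteq> 3*M" "q - 1 < P" using c1 q P by auto
        have "q + i < Fl" using a b qq by linarith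
        then show ?thesis using G1 b mm qq by simp
      qed
      moreover have "i mod P = 3*M" using j(2) mm2 by simp
      ultimately show "i \<in> ?Mis" by simp
    qed
    have "card (A1 \<union> A2) = M + (M - 1)" using cA1 cA2 dis
      by (subst card_Un_disjoint) (auto simp: A1_def A2_def)
    moreover have "card (A1 \<union> A2) \<le> card ?Mis" using s1 s2 by (intro card_mono[OF finM]) auto
    ultimately show ?thesis using M k by linarith
  next
    case c2
    show ?thesis
    proof (rule nfseg[of "M - 1"])
      show "M - 1 < M" using M1 by simp
      have e: "(M-1)*P + P = Fl" using Fl M1 by (metis Suc_diff_1 add.commute less_le_trans mult_Suc zero_less_numeral mult.commute le_add2 numeral_le_iff zero_less_iff_neq_zero)
      show "\<forall>i. (M - 1)*P \<le> i \<and> i < (M - 1)*P + 3*M \<longrightarrow> Fl \<le> q + i \<and> q + i < L"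
        using e c2 P L by auto
    qed
  next
    case c3
    define Z where "Z = {i. Fl - q \<le> i \<and> i < Fl - q + R \<and> \<not> G1 (q+i)}"
    define Tz where "Tz = {i. Fl - q \<le> i \<and> i < Fl - q + R \<and> i mod P = 3*M}"
    have cTz: "card Tz \<le> R div P + 1" unfolding Tz_def by (rule count_res[OF P0])
    have zimg: "{r. Fl \<le> r \<and> r < L \<and> \<not> G1 r} = (\<lambda>i. q + i) ` Z"
    proof
      show "{r. Fl \<le> r \<and> r < L \<and> \<not> G1 r} \<subseteq> (\<lambda>i. q + i) ` Z"
      proof
        fix r assume r: "r \<in> {r. Fl \<le> r \<and> r < L \<and> \<not> G1 r}"
        then have "r - q \<in> Z" "r = q + (r - q)" using c3 L unfolding Z_def by auto
        then show "r \<in> (\<lambda>i. q + i) ` Z" by blast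
      qed
      show "(\<lambda>i. q + i) ` Z \<subseteq> {r. Fl \<le> r \<and> r < L \<and> \<not> G1 r}"
        using c3 L unfolding Z_def by auto
    qed
    have "card {r. Fl \<le> r \<and> r < L \<and> \<not> G1 r} = card Z"
      unfolding zimg by (rule card_image) (auto simp: inj_on_def)
    moreover have "card {r. Fl \<le> r \<and> r < L \<and> \<not> G1 r} = R - card {r. Fl \<le> r \<and> r < L \<and> G1 r}"
    proof -
      have "{r. Fl \<le> r \<and> r < L \<and> \<not> G1 r} = {Fl..<L} - {r. Fl \<le> r \<and> r < L \<and> G1 r}" by auto
      moreover have "card ({Fl..<L} - {r. Fl \<le> r \<and> r < L \<and> G1 r}) = card {Fl..<L} - card {r. Fl \<le> r \<and> r < L \<and> G1 r}"
        by (rule card_Diff_subset) auto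
      ultimately show ?thesis using L by simp
    qed
    ultimately have cZ: "R - (2 + bb) \<le> card Z" using ones by linarith
    have sub: "Z - Tz \<subseteq> ?Mis"
    proof
      fix i assume i: "i \<in> Z - Tz"
      then have "i < Fl" "q + i < L" "\<not> G1 (q+i)" "i mod P \<noteq> 3*M" using c3 L unfolding Z_def Tz_def by auto
      then show "i \<in> ?Mis" by simp
    qed
    have "card Z - card Tz \<le> card (Z - Tz)" by (rule diff_card_le_card_Diff) (simp add: Tz_def)
    also have "\<dots> \<le> card ?Mis" by (rule card_mono[OF finM sub])
    finally have "card Z - card Tz \<le> card ?Mis" .
    moreover have "2*M - 2*k + 1 \<le> (R - (2+bb)) - (R div P + 1)"
      by (rule arith3[OF P R bb M N k])
    ultimately show ?thesis using cZ cTz by linarith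
  next
    case c4
    define l where "l = L - q"
    have l0: "0 < l" "l + q = L" using q unfolding l_def by auto
    show ?thesis
    proof (cases "P \<le> l")
      case True
      show ?thesis
      proof (rule nfseg[of 0])
        show "0 < M" using M1 by simp
        show "\<forall>i. 0*P \<le> i \<and> i < 0*P + 3*M \<longrightarrow> Fl \<le> q + i \<and> q + i < L"
          using True c4 l0 P by auto
      qed
    next
      case False
      define A1 where "A1 = (\<lambda>j. j*P + 3*M) ` {1..<M}"
      define A2 where "A2 = (\<lambda>j. j*P + (l - 1)) ` {1..<M}"
      have cA1: "card A1 = M - 1" unfolding A1_def using P0 by (subst card_image) (auto simp: inj_on_def)
      have cA2: "card A2 = M - 1" unfolding A2_def using P0 by (subst card_image) (auto simp: inj_on_def)
      have dis: "A1 \<inter> A2 = {}"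
      proof -
        have m1: "\<forall>x\<in>A1. x mod P = 3*M" unfolding A1_def
          by (auto intro!: mod_lin) (use P in simp)
        have m2: "\<forall>x\<in>A2. x mod P = l - 1" unfolding A2_def
          by (auto intro!: mod_lin) (use P False in simp)
        show ?thesis using m1 m2 l0 False P by fastforce
      qed
      have s1: "A1 \<subseteq> ?Mis"
      proof
        fix i assume "i \<in> A1"
        then obtain j where j: "1 \<le> j" "j < M" "i = j*P + 3*M" unfolding A1_def by auto
        have a: "j*P + P \<le> Fl" using segle[OF j(2)] .
        have jp: "P \<le> j*P" using j(1) by simp
        have ge: "\<not> q + i < L" using j(3) jp False l0 by linarith
        have b: "q + i - L = j*P + (3*M - l)" using j(3) l0 False P by simp
        have mm: "(j*P + (3*M - l)) mod P = 3*M - l" by (rule mod_lin) (use p3 in simp)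
        have mm2: "(j*P + 3*M) mod P = 3*M" by (rule mod_lin) (use p3 in simp)
        have "i < Fl" using a j(3) p3 by simp
        moreover have "G2 (q+i-L) = True" using G2 a b mm p3 False l0 P by simp
        moreover have "i mod P = 3*M" using j(3) mm2 by simp
        ultimately show "i \<in> ?Mis" using ge by simp
      qed
      have s2: "A2 \<subseteq> ?Mis"
      proof
        fix i assume "i \<in> A2"
        then obtain j where j: "1 \<le> j" "j < M" "i = j*P + (l - 1)" unfolding A2_def by auto
        have a: "j*P + P \<le> Fl" using segle[OF j(2)] .
        obtain j' where j': "j = Suc j'" using j(1) by (cases j) auto
        have jp: "P \<le> j*P" using j(1) by simp
        have ge: "\<not> q + i < L" using j(3) jp False l0 by linarith
        have b: "q + i - L = j'*P + 3*M" using j(3) l0 False P j' by simp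
        have mm: "(j'*P + 3*M) mod P = 3*M" by (rule mod_lin) (use p3 in simp)
        have mm2: "(j*P + (l - 1)) mod P = l - 1" by (rule mod_lin) (use False in simp)
        have "i < Fl" using a j(3) False by simp
        moreover have "G2 (q+i-L) = False" using G2 a b mm p3 j' by simp
        moreover have "i mod P \<noteq> 3*M" using j(3) mm2 False P l0 by simp
        ultimately show "i \<in> ?Mis" using ge by simp
      qed
      have "card (A1 \<union> A2) = (M - 1) + (M - 1)" using cA1 cA2 dis
        by (subst card_Un_disjoint) (auto simp: A1_def A2_def)
      moreover have "card (A1 \<union> A2) \<le> card ?Mis" using s1 s2 by (intro card_mono[OF finM]) auto
      ultimately show ?thesis using M k by linarith
    qed
  qed
qed



lemma window_nth:
  assumes len: "\<forall>x\<in>set E. length (f x) = L" and p: "p + L \<le> length E * L" and r: "r < L"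
  shows "concat (map f E) ! (p + r) = (if p mod L + r < L then f (E ! (p div L)) ! (p mod L + r)
           else f (E ! (p div L + 1)) ! (p mod L + r - L))"
proof -
  define a where "a = p div L"
  define q where "q = p mod L"
  have pa: "p = a*L + q" unfolding a_def q_def by simp
  have L0: "0 < L" using r by simp
  show ?thesis
  proof (cases "q + r < L")
    case True
    have "a*L < length E * L" using pa p r by linarith
    then have "a < length E" by simp
    then have "concat (map f E) ! (a*L + (q + r)) = f (E!a) ! (q + r)"
      using concat_map_nth[OF len _ True] by blast
    then show ?thesis using True pa unfolding a_def[symmetric] q_def[symmetric] by (simp add: add.assoc)
  next
    case False
    have e: "p + r = (a+1)*L + (q + r - L)" using pa False by simp
    have "(a+1)*L < length E * L" using e p r by linarith
    then have "a + 1 < length E" by (metis mult_less_cancel2)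
    moreover have "q + r - L < L"
    proof -
      have "q < L" unfolding q_def using L0 by simp
      then show ?thesis using r by linarith
    qed
    ultimately have "concat (map f E) ! ((a+1)*L + (q + r - L)) = f (E!(a+1)) ! (q + r - L)"
      using concat_map_nth[OF len] by blast
    then show ?thesis using False e pa unfolding a_def[symmetric] q_def[symmetric] by (simp add: add.assoc)
  qed
qed

theorem lemma4:
  fixes n k :: nat and E :: "(nat \<times> nat) list" and s :: "bool list"
  assumes edges: "\<forall>(r, v) \<in> set E. 1 \<le> r \<and> r < v \<and> v \<le> n"
    and distinct_edges: "distinct E"
    and k3: "k \<ge> 3"
    and len: "length s = LL n k"
    and tmpl: "close_substring (template n k) (dd n k) s"
    and choice: "\<forall>i j. 1 \<le> i \<and> i < j \<and> j \<le> k \<longrightarrow>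
                   close_substring (choice_string n E k i j) (dd n k) s"
  shows "count_list (encoding_part n k s) True = k"
proof -
  define M where "M = n*k"
  define P where "P = 3*M+1"
  define Fl where "Fl = M*P"
  define N where "N = NN k"
  define b where "b = bb n k"
  define R where "R = M + N*b"
  define L where "L = Fl + R"
  have FlF: "(3*n*k+1)*(n*k) = Fl" unfolding Fl_def P_def M_def by (simp add: algebra_simps)
  have LL: "LL n k = L" unfolding LL_def L_def R_def N_def b_def Fl_def P_def M_def
    by (simp add: algebra_simps)
  have dd: "dd n k = M - k" unfolding dd_def M_def by simp
  have P3: "3*n*k = 3*M" unfolding M_def by simp
  have sl: "length s = L" using len LL by simp
  have tlen: "length (template n k) = L"
    unfolding template_def using FlF by (simp add: front_tag_len ones_def zeros_def L_def R_def M_def N_def b_def)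
  have tF: "\<And>i. i < Fl \<Longrightarrow> template n k ! i = (i mod P \<noteq> 3*M)"
  proof -
    fix i assume i: "i < Fl"
    have "template n k ! i = front_tag n k ! i" using i FlF by (simp add: template_def nth_append front_tag_len)
    also have "\<dots> = (i mod (3*n*k+1) \<noteq> 3*n*k)" using i FlF by (intro front_tag_nth) simp
    finally show "template n k ! i = (i mod P \<noteq> 3*M)" using P3 unfolding P_def by simp
  qed
  have tR: "\<And>i. Fl \<le> i \<Longrightarrow> template n k ! i = (ones M @ zeros (N*b)) ! (i - Fl)"
    using FlF unfolding template_def M_def N_def b_def by (simp add: nth_append front_tag_len)
  have tE: "\<And>i. Fl \<le> i \<Longrightarrow> i < Fl + M \<Longrightarrow> template n k ! i"
  proof -
    fix i assume i: "Fl \<le> i" "i < Fl + M"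
    then have "i - Fl < M" by simp
    then show "template n k ! i" using tR[OF i(1)] by (simp add: nth_append ones_def)
  qed
  have tB: "\<And>i. Fl + M \<le> i \<Longrightarrow> i < L \<Longrightarrow> \<not> template n k ! i"
  proof -
    fix i assume i: "Fl + M \<le> i" "i < L"
    then have "\<not> i - Fl < M" "i - Fl - M < N*b" unfolding L_def R_def by auto
    then show "\<not> template n k ! i" using tR[of i] i by (simp add: nth_append ones_def zeros_def)
  qed
  obtain p0 where p0: "p0 + length s \<le> length (template n k)"
    "hamming (take (length s) (drop p0 (template n k))) s \<le> dd n k"
    using tmpl unfolding close_substring_def by blast
  have "p0 = 0" using p0(1) tlen sl by simp
  then have "hamming (template n k) s \<le> M - k" using p0(2) tlen sl dd by simp
  then have htm: "card {i. i < L \<and> template n k ! i \<noteq> s ! i} \<le> M - k"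
    using tlen sl by (simp add: hamming_card)
  have N3: "N \<ge> 3"
  proof -
    have "3*2 \<le> k*(k-1)" using k3 by (intro mult_le_mono) auto
    then show ?thesis unfolding N_def NN_def choose_two by simp
  qed
  have "b \<ge> 2" unfolding b_def bb_def by simp
  then have "N*b > 0" using N3 by simp
  then have Lpos: "0 < L" unfolding L_def R_def by simp
  have "close_substring (choice_string n E k 1 2) (dd n k) s" using choice k3 by simp
  then have "E \<noteq> []" unfolding close_substring_def choice_string_def using sl Lpos
    by auto
  then obtain e0 where "e0 \<in> set E" by (cases E) auto
  then have n2: "n \<ge> 2" using edges by auto
  have M2k: "M \<ge> 2*k" unfolding M_def using n2 by simp
  have bdef: "b = M + 2 - 2*k" using M2k unfolding b_def bb_def M_def[symmetric] by simp
  define x where "x = card {i. Fl \<le> i \<and> i < Fl + M \<and> s!i}"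
  define bs where "bs = card {i. Fl + M \<le> i \<and> i < L \<and> s!i}"
  define breg where "breg u = card {r. Fl + M + (u-1)*b \<le> r \<and> r < Fl + M + (u-1)*b + b \<and> s!r}" for u
  have xM: "x \<le> M"
  proof -
    have "x \<le> card {Fl..<Fl+M}" unfolding x_def by (intro card_mono) auto
    then show ?thesis by simp
  qed
  have tmplbound: "(M - x) + bs \<le> M - k"
  proof -
    define A1 where "A1 = {i. Fl \<le> i \<and> i < Fl + M \<and> \<not> s!i}"
    define A2 where "A2 = {i. Fl + M \<le> i \<and> i < L \<and> s!i}"
    have "A1 = {Fl..<Fl+M} - {i. Fl \<le> i \<and> i < Fl + M \<and> s!i}" unfolding A1_def by auto
    moreover have "{i. Fl \<le> i \<and> i < Fl + M \<and> s!i} \<subseteq> {Fl..<Fl+M}" by auto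
    ultimately have cA1: "card A1 = M - x" unfolding x_def
      using card_Diff_subset[of "{i. Fl \<le> i \<and> i < Fl + M \<and> s!i}" "{Fl..<Fl+M}"] by simp
    have "A1 \<union> A2 \<subseteq> {i. i < L \<and> template n k ! i \<noteq> s ! i}"
    proof
      fix i assume "i \<in> A1 \<union> A2"
      then consider "i \<in> A1" | "i \<in> A2" by blast
      then show "i \<in> {i. i < L \<and> template n k ! i \<noteq> s ! i}"
      proof cases
        case 1
        then have "Fl \<le> i" "i < Fl + M" "\<not> s!i" unfolding A1_def by auto
        moreover have "Fl + M \<le> L" unfolding L_def R_def by simp
        ultimately show ?thesis using tE[of i] by auto
      next
        case 2
        then have "Fl + M \<le> i" "i < L" "s!i" unfolding A2_def by auto
        then show ?thesis using tB[of i] by auto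
      qed
    qed
    moreover have "finite {i. i < L \<and> template n k ! i \<noteq> s ! i}" by simp
    ultimately have "card (A1 \<union> A2) \<le> card {i. i < L \<and> template n k ! i \<noteq> s ! i}"
      by (rule card_mono[rotated])
    then have "card (A1 \<union> A2) \<le> M - k" using htm by linarith
    moreover have "finite A1" by (rule finite_subset[of _ "{..<Fl+M}"]) (auto simp: A1_def)
    moreover have "finite A2" by (rule finite_subset[of _ "{..<L}"]) (auto simp: A2_def)
    moreover have "A1 \<inter> A2 = {}" by (auto simp: A1_def A2_def)
    ultimately have "card A1 + card A2 \<le> M - k" by (simp add: card_Un_disjoint)
    then show ?thesis using cA1 unfolding A2_def bs_def by simp
  qed
  have xk: "k \<le> x" using tmplbound xM M2k by linarith
  have bsx: "bs \<le> x - k" using tmplbound xM M2k by linarith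
  have key: "x - k \<le> breg (pair_pos k i j)" if ij: "1 \<le> i" "i < j" "j \<le> k" for i j
  proof -
    define u where "u = pair_pos k i j"
    have u: "1 \<le> u" "u \<le> N" using pair_pos_bounds[OF ij] unfolding u_def N_def by auto
    define c where "c = choice_string n E k i j"
    have blen: "\<forall>e\<in>set E. length (block n k i j e) = L"
    proof
      fix e assume "e \<in> set E"
      then have "1 \<le> fst e" "fst e < snd e" "snd e \<le> n" using edges by auto
      then show "length (block n k i j e) = L"
        using block_len[of i j k e n] ij pair_pos_bounds[OF ij] LL by simp
    qed
    have clen: "length c = length E * L" unfolding c_def choice_string_def by (rule concat_map_len[OF blen])
    obtain p where p: "p + length s \<le> length c" "hamming (take (length s) (drop p c)) s \<le> dd n k"
      using choice ij unfolding close_substring_def c_def by blast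
    define w where "w = take L (drop p c)"
    have wlen: "length w = L" unfolding w_def using p(1) sl by simp
    have wn: "\<And>r. r < L \<Longrightarrow> w ! r = c ! (p + r)" unfolding w_def using p(1) sl by simp
    have hw: "card {r. r < L \<and> w ! r \<noteq> s ! r} \<le> M - k"
      using p(2) sl wlen dd unfolding w_def[symmetric] by (simp add: hamming_card w_def[symmetric])
    define a where "a = p div L"
    define q where "q = p mod L"
    have L0: "0 < L" unfolding L_def Fl_def P_def using M2k k3 by simp
    have aE: "a < length E"
    proof -
      have "a * L \<le> p" unfolding a_def by (rule div_times_less_eq_dividend)
      then have "a * L < length E * L" using p(1) sl clen L0 by linarith
      then show ?thesis by (metis mult_less_cancel2)
    qed
    have wv: "\<And>r. r < L \<Longrightarrow> w ! r = (if q + r < L then block n k i j (E ! a) ! (q + r)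
           else block n k i j (E ! (a + 1)) ! (q + r - L))"
      using wn window_nth[OF blen] p(1) sl clen unfolding c_def choice_string_def a_def q_def by simp
    have q0: "q = 0"
    proof (rule ccontr)
      assume "q \<noteq> 0"
      then have qq: "0 < q" "q < L" unfolding q_def using L0 by auto
      define G1 where "G1 r = block n k i j (E ! a) ! r" for r
      define G2 where "G2 r = block n k i j (E ! (a+1)) ! r" for r
      have g1: "\<forall>r<Fl. G1 r = (r mod P \<noteq> 3*M)"
      proof (intro allI impI)
        fix r assume r: "r < Fl"
        have "G1 r = (r mod (3*n*k+1) \<noteq> 3*n*k)" unfolding G1_def using FlF r by (intro block_front) simp
        then show "G1 r = (r mod P \<noteq> 3*M)" unfolding P_def P3 .
      qed
      have g2: "\<forall>r<Fl. G2 r = (r mod P \<noteq> 3*M)"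
      proof (intro allI impI)
        fix r assume r: "r < Fl"
        have "G2 r = (r mod (3*n*k+1) \<noteq> 3*n*k)" unfolding G2_def using FlF r by (intro block_front) simp
        then show "G2 r = (r mod P \<noteq> 3*M)" unfolding P_def P3 .
      qed
      have ones: "card {r. Fl \<le> r \<and> r < L \<and> G1 r} \<le> 2 + b"
      proof -
        define NF where "NF = encode n k i j (E!a) @ back_tag n k u"
        have ea: "E ! a \<in> set E" using aE by simp
        then have "1 \<le> fst (E!a)" "fst (E!a) < snd (E!a)" "snd (E!a) \<le> n" using edges by auto
        then have enl: "length (encode n k i j (E!a)) = M" using encode_len[of i j k "E!a" n] ij M_def by simp
        have bl: "length (back_tag n k u) = N*b" using back_tag_len[OF u[unfolded N_def]] N_def b_def by simp
        have cnt: "count_list NF True = 2 + b" unfolding NF_def by (simp add: encode_count back_tag_count b_def)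
        have G1NF: "G1 r = NF ! (r - Fl)" if "Fl \<le> r" for r
          unfolding G1_def NF_def u_def using block_rest[of n k r i j "E!a"] FlF that by simp
        have lNF: "length NF = R" unfolding NF_def R_def using enl bl by simp
        have img: "{r. Fl \<le> r \<and> r < L \<and> G1 r} = (\<lambda>x. x + Fl) ` {x. x < length NF \<and> NF ! x = True}"
        proof (rule set_eqI, rule iffI)
          fix r assume "r \<in> {r. Fl \<le> r \<and> r < L \<and> G1 r}"
          then have r: "Fl \<le> r" "r < L" "G1 r" by simp_all
          have "NF ! (r - Fl)" using G1NF[OF r(1)] r(3) by simp
          moreover have "r - Fl < length NF" using r lNF unfolding L_def by simp
          moreover have "r = (r - Fl) + Fl" using r by simp
          ultimately show "r \<in> (\<lambda>x. x + Fl) ` {x. x < length NF \<and> NF ! x = True}"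
            by blast
        next
          fix r assume "r \<in> (\<lambda>x. x + Fl) ` {x. x < length NF \<and> NF ! x = True}"
          then obtain y where y: "r = y + Fl" "y < length NF" "NF ! y" by blast
          have "G1 r = NF ! y" using G1NF[of r] y(1) by simp
          moreover have "r < L" using y lNF unfolding L_def by simp
          ultimately show "r \<in> {r. Fl \<le> r \<and> r < L \<and> G1 r}" using y by simp
        qed
        have "card {r. Fl \<le> r \<and> r < L \<and> G1 r} = card {x. x < length NF \<and> NF ! x = True}"
          unfolding img by (rule card_image) (simp add: inj_on_def)
        also have "\<dots> = count_list NF True" by (rule count_card[symmetric])
        also have "\<dots> = 2 + b" by (rule cnt)
        finally show ?thesis by simp
      qed
      have wb: "2*M - 2*k + 1 \<le> card {r. r < Fl \<and> (if q + r < L then G1 (q+r) else G2 (q+r-L)) \<noteq> (r mod P \<noteq> 3*M)}"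
        by (rule window_bound[OF P_def Fl_def R_def L_def k3 M2k bdef N3 g1 g2 ones qq])
      have "{r. r < Fl \<and> (if q + r < L then G1 (q+r) else G2 (q+r-L)) \<noteq> (r mod P \<noteq> 3*M)}
            \<subseteq> {r. r < L \<and> w ! r \<noteq> s ! r} \<union> {i. i < L \<and> template n k ! i \<noteq> s ! i}"
      proof
        fix r assume r: "r \<in> {r. r < Fl \<and> (if q + r < L then G1 (q+r) else G2 (q+r-L)) \<noteq> (r mod P \<noteq> 3*M)}"
        then have rF: "r < Fl" by simp
        then have rl: "r < L" unfolding L_def by simp
        have e1: "w ! r = (if q + r < L then G1 (q+r) else G2 (q+r-L))" using wv[OF rl] unfolding G1_def G2_def by simp
        have e2: "template n k ! r = (r mod P \<noteq> 3*M)" using tF[OF rF] .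
        have "w ! r \<noteq> template n k ! r" using r e1 e2 by simp
        then have "w ! r \<noteq> s ! r \<or> template n k ! r \<noteq> s ! r" by blast
        then show "r \<in> {r. r < L \<and> w ! r \<noteq> s ! r} \<union> {i. i < L \<and> template n k ! i \<noteq> s ! i}"
          using rl by blast
      qed
      then have "card {r. r < Fl \<and> (if q + r < L then G1 (q+r) else G2 (q+r-L)) \<noteq> (r mod P \<noteq> 3*M)}
            \<le> card ({r. r < L \<and> w ! r \<noteq> s ! r} \<union> {i. i < L \<and> template n k ! i \<noteq> s ! i})"
        by (rule card_mono[rotated]) simp_all
      also have "\<dots> \<le> card {r. r < L \<and> w ! r \<noteq> s ! r} + card {i. i < L \<and> template n k ! i \<noteq> s ! i}"
        by (rule card_Un_le)
      finally show False using wb hw htm M2k by linarith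
    qed
    have ea: "E ! a \<in> set E" using aE by simp
    then have eb: "1 \<le> fst (E!a)" "fst (E!a) < snd (E!a)" "snd (E!a) \<le> n" using edges by auto
    then have enl: "length (encode n k i j (E!a)) = M" using encode_len[of i j k "E!a" n] ij M_def by simp
    have wB: "\<And>r. r < L \<Longrightarrow> w ! r = block n k i j (E ! a) ! r" using wv q0 by simp
    have wenc: "\<And>r. Fl \<le> r \<Longrightarrow> r < Fl + M \<Longrightarrow> w ! r = encode n k i j (E!a) ! (r - Fl)"
    proof -
      fix r assume r: "Fl \<le> r" "r < Fl + M"
      then have rL: "r < L" unfolding L_def R_def by simp
      have "w ! r = block n k i j (E ! a) ! r" using wB[OF rL] .
      also have "\<dots> = (encode n k i j (E!a) @ back_tag n k (pair_pos k i j)) ! (r - Fl)"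
        using block_rest[of n k r i j "E!a"] FlF r by simp
      also have "\<dots> = encode n k i j (E!a) ! (r - Fl)"
      proof -
        have "r - Fl < length (encode n k i j (E!a))" using r enl by simp
        then show ?thesis by (simp add: nth_append)
      qed
      finally show "w ! r = encode n k i j (E!a) ! (r - Fl)" .
    qed
    define A1 where "A1 = {r. Fl \<le> r \<and> r < Fl + M \<and> s!r} - {r. Fl \<le> r \<and> r < Fl + M \<and> w!r}"
    define A2 where "A2 = {r. Fl + M + (u-1)*b \<le> r \<and> r < Fl + M + (u-1)*b + b \<and> \<not> s!r}"
    have encw: "card {r. Fl \<le> r \<and> r < Fl + M \<and> w!r} = 2"
    proof -
      have img: "{r. Fl \<le> r \<and> r < Fl + M \<and> w!r} = (\<lambda>y. y + Fl) ` {y. y < length (encode n k i j (E!a)) \<and> encode n k i j (E!a) ! y = True}"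
      proof (rule set_eqI, rule iffI)
        fix r assume "r \<in> {r. Fl \<le> r \<and> r < Fl + M \<and> w!r}"
        then show "r \<in> (\<lambda>y. y + Fl) ` {y. y < length (encode n k i j (E!a)) \<and> encode n k i j (E!a) ! y = True}"
          using wenc enl by (auto intro!: image_eqI[where x="r - Fl"])
      next
        fix r assume "r \<in> (\<lambda>y. y + Fl) ` {y. y < length (encode n k i j (E!a)) \<and> encode n k i j (E!a) ! y = True}"
        then show "r \<in> {r. Fl \<le> r \<and> r < Fl + M \<and> w!r}" using wenc enl by auto
      qed
      have "card {r. Fl \<le> r \<and> r < Fl + M \<and> w!r} = card {y. y < length (encode n k i j (E!a)) \<and> encode n k i j (E!a) ! y = True}"
        unfolding img by (rule card_image) (simp add: inj_on_def)
      also have "\<dots> = count_list (encode n k i j (E!a)) True" by (rule count_card[symmetric])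
      finally show ?thesis by (simp add: encode_count)
    qed
    have cA1: "x - 2 \<le> card A1"
    proof -
      have "finite {r. Fl \<le> r \<and> r < Fl + M \<and> w!r}" by (rule finite_subset[of _ "{..<Fl+M}"]) auto
      then have "card {r. Fl \<le> r \<and> r < Fl + M \<and> s!r} - card {r. Fl \<le> r \<and> r < Fl + M \<and> w!r} \<le> card A1"
        unfolding A1_def by (rule diff_card_le_card_Diff)
      then show ?thesis using encw unfolding x_def by simp
    qed
    have breg_le: "breg u \<le> b" unfolding breg_def
    proof -
      have "card {r. Fl + M + (u-1)*b \<le> r \<and> r < Fl + M + (u-1)*b + b \<and> s!r} \<le> card {Fl + M + (u-1)*b..<Fl + M + (u-1)*b + b}"
        by (intro card_mono) auto
      then show "card {r. Fl + M + (u-1)*b \<le> r \<and> r < Fl + M + (u-1)*b + b \<and> s!r} \<le> b" by simp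
    qed
    have cA2: "card A2 = b - breg u"
    proof -
      have "A2 = {Fl + M + (u-1)*b..<Fl + M + (u-1)*b + b} - {r. Fl + M + (u-1)*b \<le> r \<and> r < Fl + M + (u-1)*b + b \<and> s!r}"
        unfolding A2_def by auto
      moreover have "{r. Fl + M + (u-1)*b \<le> r \<and> r < Fl + M + (u-1)*b + b \<and> s!r} \<subseteq> {Fl + M + (u-1)*b..<Fl + M + (u-1)*b + b}" by auto
      ultimately show ?thesis unfolding breg_def
        using card_Diff_subset[of "{r. Fl + M + (u-1)*b \<le> r \<and> r < Fl + M + (u-1)*b + b \<and> s!r}" "{Fl + M + (u-1)*b..<Fl + M + (u-1)*b + b}"] by simp
    qed
    have uN: "(u-1)*b + b \<le> N*b" proof -
      have "(u-1)*b + b = u*b" using u by (cases u) auto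
      moreover have "u*b \<le> N*b" using u by (intro mult_le_mono1) simp
      ultimately show ?thesis by simp
    qed
    have A2w: "\<And>r. r \<in> A2 \<Longrightarrow> w ! r"
    proof -
      fix r assume r: "r \<in> A2"
      have rL: "r < L" using r uN unfolding A2_def L_def R_def by auto
      have "w ! r = block n k i j (E ! a) ! r" using wB[OF rL] .
      also have "\<dots> = back_tag n k u ! (r - Fl - M)"
      proof -
        have r1: "Fl + M \<le> r" using r unfolding A2_def by simp
        have "block n k i j (E ! a) ! r = (encode n k i j (E!a) @ back_tag n k u) ! (r - Fl)"
          using block_rest[of n k r i j "E!a"] FlF r1 unfolding u_def by simp
        also have "\<dots> = back_tag n k u ! (r - Fl - M)"
        proof -
          have "\<not> r - Fl < length (encode n k i j (E!a))" using r1 enl by simp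
          then show ?thesis using enl by (simp add: nth_append)
        qed
        finally show ?thesis .
      qed
      also have "\<dots>" by (rule back_tag_nth) (use r in \<open>auto simp: A2_def b_def\<close>)
      finally show "w ! r" .
    qed
    have "A1 \<union> A2 \<subseteq> {r. r < L \<and> w ! r \<noteq> s ! r}"
    proof
      fix r assume "r \<in> A1 \<union> A2"
      then show "r \<in> {r. r < L \<and> w ! r \<noteq> s ! r}"
      proof
        assume "r \<in> A1" then show ?thesis unfolding A1_def L_def R_def by auto
      next
        assume r: "r \<in> A2"
        then have "r < L" using uN unfolding A2_def L_def R_def by auto
        then show ?thesis using A2w[OF r] r unfolding A2_def by auto
      qed
    qed
    moreover have "finite {r. r < L \<and> w ! r \<noteq> s ! r}" by simp
    ultimately have "card (A1 \<union> A2) \<le> card {r. r < L \<and> w ! r \<noteq> s ! r}"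
      by (rule card_mono[rotated])
    then have "card (A1 \<union> A2) \<le> M - k" using hw by linarith
    moreover have "card (A1 \<union> A2) = card A1 + card A2"
    proof (rule card_Un_disjoint)
      show "finite A1" by (rule finite_subset[of _ "{..<Fl+M}"]) (auto simp: A1_def)
      show "finite A2" by (rule finite_subset[of _ "{..<Fl + M + (u-1)*b + b}"]) (auto simp: A2_def)
      show "A1 \<inter> A2 = {}" by (auto simp: A1_def A2_def)
    qed
    ultimately show ?thesis using cA1 cA2 breg_le xk k3 bdef M2k unfolding u_def[symmetric] by linarith
  qed
  have pp: "\<And>i j. 1 \<le> i \<Longrightarrow> i < j \<Longrightarrow> j \<le> k \<Longrightarrow> 1 \<le> pair_pos k i j \<and> pair_pos k i j \<le> N \<and> pairs k ! (pair_pos k i j - 1) = (i,j)"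
    using pair_pos_bounds unfolding N_def by blast
  define u1 where "u1 = pair_pos k 1 2"
  define u2 where "u2 = pair_pos k 1 3"
  define u3 where "u3 = pair_pos k 2 3"
  have u1: "1 \<le> u1" "u1 \<le> N" "pairs k ! (u1 - 1) = (1,2)" using pp[of 1 2] k3 unfolding u1_def by auto
  have u2: "1 \<le> u2" "u2 \<le> N" "pairs k ! (u2 - 1) = (1,3)" using pp[of 1 3] k3 unfolding u2_def by auto
  have u3: "1 \<le> u3" "u3 \<le> N" "pairs k ! (u3 - 1) = (2,3)" using pp[of 2 3] k3 unfolding u3_def by auto
  have d12: "u1 \<noteq> u2" using u1 u2 by auto
  have d13: "u1 \<noteq> u3" using u1 u3 by auto
  have d23: "u2 \<noteq> u3" using u2 u3 by auto
  have b0: "0 < b" using bdef M2k by simp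
  define Reg where "Reg u = {r. Fl + M + (u-1)*b \<le> r \<and> r < Fl + M + (u-1)*b + b \<and> s!r}" for u
  have regdiv: "\<And>u r. r \<in> Reg u \<Longrightarrow> (r - Fl - M) div b = u - 1"
  proof -
    fix u r assume "r \<in> Reg u"
    then have "b * (u-1) \<le> r - Fl - M" "r - Fl - M < b * Suc (u-1)" unfolding Reg_def by (auto simp: algebra_simps)
    then show "(r - Fl - M) div b = u - 1" by (rule div_nat_eqI)
  qed
  have regdis: "\<And>u v. 1 \<le> u \<Longrightarrow> 1 \<le> v \<Longrightarrow> u \<noteq> v \<Longrightarrow> Reg u \<inter> Reg v = {}"
  proof -
    fix u v :: nat assume uv: "1 \<le> u" "1 \<le> v" "u \<noteq> v"
    show "Reg u \<inter> Reg v = {}"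
    proof (rule ccontr)
      assume "Reg u \<inter> Reg v \<noteq> {}"
      then obtain r where "r \<in> Reg u" "r \<in> Reg v" by auto
      then have "u - 1 = v - 1" using regdiv by metis
      then show False using uv by simp
    qed
  qed
  have regsub: "\<And>u. 1 \<le> u \<Longrightarrow> u \<le> N \<Longrightarrow> Reg u \<subseteq> {i. Fl + M \<le> i \<and> i < L \<and> s!i}"
  proof -
    fix u assume u: "1 \<le> u" "u \<le> N"
    have "(u-1)*b + b \<le> N*b" proof -
      have "(u-1)*b + b = u*b" using u by (cases u) auto
      moreover have "u*b \<le> N*b" using u by (intro mult_le_mono1) simp
      ultimately show ?thesis by simp
    qed
    then show "Reg u \<subseteq> {i. Fl + M \<le> i \<and> i < L \<and> s!i}" unfolding Reg_def L_def R_def by auto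
  qed
  have "card (Reg u1 \<union> Reg u2 \<union> Reg u3) \<le> bs" unfolding bs_def
    using regsub[OF u1(1,2)] regsub[OF u2(1,2)] regsub[OF u3(1,2)]
    by (intro card_mono) auto
  moreover have "card (Reg u1 \<union> Reg u2 \<union> Reg u3) = card (Reg u1) + card (Reg u2) + card (Reg u3)"
  proof -
    have "card (Reg u1 \<union> Reg u2) = card (Reg u1) + card (Reg u2)"
      using regdis[OF u1(1) u2(1) d12] by (intro card_Un_disjoint) (auto simp: Reg_def)
    moreover have "card ((Reg u1 \<union> Reg u2) \<union> Reg u3) = card (Reg u1 \<union> Reg u2) + card (Reg u3)"
      using regdis[OF u1(1) u3(1) d13] regdis[OF u2(1) u3(1) d23] by (intro card_Un_disjoint) (auto simp: Reg_def)
    ultimately show ?thesis by simp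
  qed
  moreover have "x - k \<le> card (Reg u1)" "x - k \<le> card (Reg u2)" "x - k \<le> card (Reg u3)"
    using key[of 1 2] key[of 1 3] key[of 2 3] k3 unfolding u1_def u2_def u3_def Reg_def breg_def by auto
  ultimately have xeq: "x = k" using bsx xk by linarith
  have ep: "encoding_part n k s = take M (drop Fl s)"
  proof -
    have "(3*n*k+1)*n*k = (3*n*k+1)*(n*k)" by (rule mult.assoc)
    then have "(3*n*k+1)*n*k = Fl" using FlF by simp
    then show ?thesis unfolding encoding_part_def M_def by simp
  qed
  have eplen: "length (take M (drop Fl s)) = M" using sl unfolding L_def R_def by simp
  have "{y. y < length (take M (drop Fl s)) \<and> take M (drop Fl s) ! y = True} = {y. y < M \<and> s ! (Fl + y)}"
  proof (rule Collect_cong)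
    fix y
    show "(y < length (take M (drop Fl s)) \<and> take M (drop Fl s) ! y = True) = (y < M \<and> s ! (Fl + y))"
      using eplen by (cases "y < M") (simp_all add: nth_take nth_drop)
  qed
  moreover have "{i. Fl \<le> i \<and> i < Fl + M \<and> s!i} = (\<lambda>y. Fl + y) ` {y. y < M \<and> s ! (Fl + y)}"
  proof (rule set_eqI, rule iffI)
    fix i assume "i \<in> {i. Fl \<le> i \<and> i < Fl + M \<and> s!i}"
    then show "i \<in> (\<lambda>y. Fl + y) ` {y. y < M \<and> s ! (Fl + y)}" by (auto intro!: image_eqI[where x="i - Fl"])
  qed auto
  moreover have "card ((\<lambda>y. Fl + y) ` {y. y < M \<and> s ! (Fl + y)}) = card {y. y < M \<and> s ! (Fl + y)}"
    by (rule card_image) (auto simp: inj_on_def)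
  ultimately have "count_list (take M (drop Fl s)) True = x"
    unfolding x_def count_card by simp
  then show ?thesis using ep xeq by simp
qed


end
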